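(* Let $q$ be a nonzero complex number which is not a root of unity, and let $\mu(u)=\sum_{r\ge0}\mu^{(r)}u^{-r}$, $\bar\mu(u)=\sum_{r\ge0}\bar\mu^{(r)}u^r$ be formal series with complex coefficients. If the irreducible highest weight representation $V(\mu(u);\bar\mu(u))$ of $\mathrm{Y}'_q(\mathfrak{sp}_2)$ is finite-dimensional, then both $\mu^{(0)}$ and $\bar\mu^{(0)}$ are nonzero.
   Context: $R(u,v)=(u-v)\sum_{i\ne j}E_{ii}\otimes E_{jj}+(q^{-1}u-qv)\sum_i E_{ii}\otimes E_{ii}+(q^{-1}-q)u\sum_{i>j}E_{ij}\otimes E_{ji}+(q^{-1}-q)v\sum_{i<j}E_{ij}\otimes E_{ji}$ with indices in $\{1,2\}$. $\mathrm{U}^{\rm ext}_q(\widehat{\mathfrak{gl}}_2)$ is the algebra with generators $t_{ij}^{(r)},\bar t_{ij}^{(r)}$ ($r\ge0$), $(t_{ii}^{(0)})^{-1},(\bar t_{ii}^{(0)})^{-1}$, series $t_{ij}(u)=\sum_rt_{ij}^{(r)}u^{-r}$, $\bar t_{ij}(u)=\sum_r\bar t_{ij}^{(r)}u^r$, matrices $T(u)=\sum t_{ij}(u)\otimes E_{ij}$, $\overline T(u)=\sum \bar t_{ij}(u)\otimes E_{ij}$ and relations $t_{12}^{(0)}=\bar t_{21}^{(0)}=0$, $t_{ii}^{(0)}\bar t_{ii}^{(0)}=\bar t_{ii}^{(0)}t_{ii}^{(0)}$, inverse relations, $R(u,v)T_1(u)T_2(v)=T_2(v)T_1(u)R(u,v)$,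 $R(u,v)\overline T_1(u)\overline T_2(v)=\overline T_2(v)\overline T_1(u)R(u,v)$, $R(u,v)\overline T_1(u)T_2(v)=T_2(v)\overline T_1(u)R(u,v)$. $\mathrm{Y}'_q(\mathfrak{sp}_2)$ is its subalgebra generated by the coefficients of $s_{ij}(u)=q\,t_{i1}(u)\bar t_{j2}(u^{-1})-t_{i2}(u)\bar t_{j1}(u^{-1})$ and by $(s_{12}^{(0)})^{-1}$; $\bar s_{ij}(u)=q\,\bar t_{i1}(u)t_{j2}(u^{-1})-\bar t_{i2}(u)t_{j1}(u^{-1})$. $V(\mu(u);\bar\mu(u))$ is the unique irreducible quotient of the Verma module, the quotient of $\mathrm{Y}'_q(\mathfrak{sp}_2)$ by the left ideal generated by the coefficients of $s_{11}(u)$, $s_{21}(u)-\mu(u)$ and $\bar s_{21}(u)-\bar\mu(u)$. *)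

theory Defs
  imports Complex_Main "HOL-Library.Poly_Mapping"
begin

text \<open>Words in an alphabet form a monoid under concatenation; the monoid algebra
  (finitely supported complex functions on words, with convolution product) is the
  free associative unital complex algebra on the alphabet.\<close>

datatype 'a word = Wd "'a list"

instantiation word :: (type) monoid_add
begin
fun plus_word :: "'a word \<Rightarrow> 'a word \<Rightarrow> 'a word" where
  "plus_word (Wd xs) (Wd ys) = Wd (xs @ ys)"
definition zero_word :: "'a word" where "zero_word = Wd []"
instance
proof
  fix a b c :: "'a word"
  show "a + b + c = a + (b + c)" by (cases a; cases b; cases c) simp
  show "0 + a = a" by (cases a) (simp add: zero_word_def)
  show "a + 0 = a" by (cases a) (simp add: zero_word_def)
qed
end

datatype ix = I1 | I2

fun ixn :: "ix \<Rightarrow> nat" where "ixn I1 = 1" | "ixn I2 = 2"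

text \<open>Generators: t_ij^(r), tbar_ij^(r), (t_ii^(0))^-1, (tbar_ii^(0))^-1.\<close>
datatype gen = Tg ix ix nat | TBg ix ix nat | TinvG ix | TBinvG ix

type_synonym fa = "gen word \<Rightarrow>\<^sub>0 complex"

definition gn :: "gen \<Rightarrow> fa" where "gn g = Poly_Mapping.single (Wd [g]) 1"

definition sc :: "complex \<Rightarrow> fa" where "sc c = Poly_Mapping.single 0 c"

text \<open>Coefficient of u^k (k an integer) of t_ij(u) = sum_r t_ij^(r) u^-r and of
  tbar_ij(u) = sum_r tbar_ij^(r) u^r.\<close>
definition tser :: "ix \<Rightarrow> ix \<Rightarrow> int \<Rightarrow> fa" where
  "tser i j k = (if k \<le> 0 then gn (Tg i j (nat (-k))) else 0)"
definition tbser :: "ix \<Rightarrow> ix \<Rightarrow> int \<Rightarrow> fa" where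
  "tbser i j k = (if 0 \<le> k then gn (TBg i j (nat k)) else 0)"

text \<open>The entry of R(u,v) at E_ae (x) E_bf is alpha*u + beta*v; Rent returns (alpha, beta).\<close>
definition Rent :: "complex \<Rightarrow> ix \<Rightarrow> ix \<Rightarrow> ix \<Rightarrow> ix \<Rightarrow> complex \<times> complex" where
  "Rent q a b e f =
     (if a = e \<and> b = f \<and> a = b then (inverse q, - q)
      else if a = e \<and> b = f \<and> a \<noteq> b then (1, -1)
      else if a = f \<and> b = e \<and> ixn a > ixn b then (inverse q - q, 0)
      else if a = f \<and> b = e \<and> ixn a < ixn b then (0, inverse q - q)
      else (0, 0))"

definition ixs :: "ix set" where "ixs = {I1, I2}"

text \<open>Coefficient of u^m v^n of the (a,b),(c,d) entry of
  R(u,v) X_1(u) Y_2(v) - Y_2(v) X_1(u) R(u,v).\<close>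
definition rtt :: "complex \<Rightarrow> (ix \<Rightarrow> ix \<Rightarrow> int \<Rightarrow> fa) \<Rightarrow> (ix \<Rightarrow> ix \<Rightarrow> int \<Rightarrow> fa)
    \<Rightarrow> ix \<Rightarrow> ix \<Rightarrow> ix \<Rightarrow> ix \<Rightarrow> int \<Rightarrow> int \<Rightarrow> fa" where
  "rtt q X Y a b c d m n =
     (\<Sum>e\<in>ixs. \<Sum>f\<in>ixs.
        sc (fst (Rent q a b e f)) * X e c (m - 1) * Y f d n
      + sc (snd (Rent q a b e f)) * X e c m * Y f d (n - 1))
   - (\<Sum>e\<in>ixs. \<Sum>f\<in>ixs.
        Y b f n * X a e (m - 1) * sc (fst (Rent q e f c d))
      + Y b f (n - 1) * X a e m * sc (snd (Rent q e f c d)))"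

definition rels :: "complex \<Rightarrow> fa set" where
  "rels q =
     {gn (Tg I1 I2 0), gn (TBg I2 I1 0)}
   \<union> {gn (Tg i i 0) * gn (TBg i i 0) - gn (TBg i i 0) * gn (Tg i i 0) | i. True}
   \<union> {gn (Tg i i 0) * gn (TinvG i) - 1 | i. True}
   \<union> {gn (TinvG i) * gn (Tg i i 0) - 1 | i. True}
   \<union> {gn (TBg i i 0) * gn (TBinvG i) - 1 | i. True}
   \<union> {gn (TBinvG i) * gn (TBg i i 0) - 1 | i. True}
   \<union> {rtt q tser tser a b c d m n | a b c d m n. True}
   \<union> {rtt q tbser tbser a b c d m n | a b c d m n. True}
   \<union> {rtt q tbser tser a b c d m n | a b c d m n. True}"

text \<open>The two-sided ideal generated by the relations; U^ext_q(gl_2-hat) = fa / Rel q.\<close>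
definition Rel :: "complex \<Rightarrow> fa set" where
  "Rel q = \<Inter>{J. rels q \<subseteq> J \<and> 0 \<in> J \<and> (\<forall>x\<in>J. \<forall>y\<in>J. x + y \<in> J)
                 \<and> (\<forall>x\<in>J. \<forall>a b. a * x * b \<in> J)}"

text \<open>s_ij(u) = sum_k s_ij^(k) u^-k and sbar_ij(u) = sum_k sbar_ij^(k) u^k.\<close>
definition scoef :: "complex \<Rightarrow> ix \<Rightarrow> ix \<Rightarrow> nat \<Rightarrow> fa" where
  "scoef q i j k = (\<Sum>r\<le>k. sc q * gn (Tg i I1 r) * gn (TBg j I2 (k - r))
                            - gn (Tg i I2 r) * gn (TBg j I1 (k - r)))"
definition sbcoef :: "complex \<Rightarrow> ix \<Rightarrow> ix \<Rightarrow> nat \<Rightarrow> fa" where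
  "sbcoef q i j k = (\<Sum>r\<le>k. sc q * gn (TBg i I1 r) * gn (Tg j I2 (k - r))
                             - gn (TBg i I2 r) * gn (Tg j I1 (k - r)))"

text \<open>Preimage in fa of Y'_q(sp_2): the smallest subalgebra containing Rel q, the
  coefficients of s_ij(u), and the (representatives of the) inverse of s_12^(0).\<close>
definition Yp :: "complex \<Rightarrow> fa set" where
  "Yp q = \<Inter>{S. Rel q \<subseteq> S \<and> (\<forall>i j k. scoef q i j k \<in> S)
              \<and> {x. x * scoef q I1 I2 0 - 1 \<in> Rel q \<and> scoef q I1 I2 0 * x - 1 \<in> Rel q} \<subseteq> S
              \<and> 1 \<in> S \<and> (\<forall>c. \<forall>x\<in>S. sc c * x \<in> S)
              \<and> (\<forall>x\<in>S. \<forall>y\<in>S. x + y \<in> S) \<and> (\<forall>x\<in>S. \<forall>y\<in>S. x * y \<in> S)}"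

text \<open>Preimages in fa of left ideals of Y'_q(sp_2).\<close>
definition lideal :: "complex \<Rightarrow> fa set \<Rightarrow> bool" where
  "lideal q J \<longleftrightarrow> Rel q \<subseteq> J \<and> J \<subseteq> Yp q \<and> (\<forall>x\<in>J. \<forall>y\<in>J. x + y \<in> J)
                   \<and> (\<forall>a\<in>Yp q. \<forall>x\<in>J. a * x \<in> J)"

text \<open>Generators of the left ideal defining the Verma module.\<close>
definition verma_gens :: "complex \<Rightarrow> (nat \<Rightarrow> complex) \<Rightarrow> (nat \<Rightarrow> complex) \<Rightarrow> fa set" where
  "verma_gens q mu mub =
     {scoef q I1 I1 k | k. True}
   \<union> {scoef q I2 I1 k - sc (mu k) | k. True}
   \<union> {sbcoef q I2 I1 k - sc (mub k) | k. True}"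

text \<open>J (the preimage of) a maximal proper left ideal of Y' containing the Verma ideal,
  so that Y'/J = V(mu(u); mubar(u)) (the irreducible quotient of the Verma module).\<close>
definition irr_ideal :: "complex \<Rightarrow> (nat \<Rightarrow> complex) \<Rightarrow> (nat \<Rightarrow> complex) \<Rightarrow> fa set \<Rightarrow> bool" where
  "irr_ideal q mu mub J \<longleftrightarrow> lideal q J \<and> verma_gens q mu mub \<subseteq> J \<and> J \<noteq> Yp q
     \<and> (\<forall>K. lideal q K \<and> J \<subseteq> K \<longrightarrow> K = J \<or> K = Yp q)"

definition fin_dim_quot :: "complex \<Rightarrow> fa set \<Rightarrow> bool" where
  "fin_dim_quot q J \<longleftrightarrow> (\<exists>F. finite F \<and> F \<subseteq> Yp q \<and>
      (\<forall>y\<in>Yp q. \<exists>c. y - (\<Sum>f\<in>F. sc (c f) * f) \<in> J))"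

end

theory Submission
  imports Defs
begin

section \<open>Scalars\<close>

lemma mult_single0_right: "(p::fa) * Poly_Mapping.single 0 s = Poly_Mapping.map (\<lambda>v. v * s) p"
proof(transfer fixing: s)
  fix p :: "gen word \<Rightarrow> complex"
  assume *: "finite {x. p x \<noteq> 0}"
  have "prod_fun p (\<lambda>k'. s when 0 = k') x = (\<lambda>k. p k * s when p k \<noteq> 0) x" (is "?lhs = ?rhs") for x
  proof -
    have inner: "(\<Sum>q. (s when q = 0) when x = l + q) = (s when x = l)" for l
    proof -
      have "(\<lambda>q. (s when q = 0) when x = l + q) = (\<lambda>q. if q = 0 then (s when x = l) else 0)"
        by (auto simp: when_def fun_eq_iff)
      then show ?thesis by (simp only: Sum_any.delta)
    qed
    have "?lhs = (\<Sum>l. p l * (s when x = l))"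
      by (simp add: prod_fun_def inner)
    also have "\<dots> = (\<Sum>l. (p x * s) when l = x)"
      by (rule Sum_any.cong) (auto simp: when_def)
    also have "\<dots> = ?rhs"
      by (simp add: when_def)
    finally show ?thesis .
  qed
  then show "prod_fun p (\<lambda>k'. s when 0 = k') = (\<lambda>k. p k * s when p k \<noteq> 0)"
    by(simp add: fun_eq_iff)
qed

lemma sc_comm: "x * sc c = sc c * x"
proof -
  have "(\<lambda>v. v*c) = (*) c" by (rule ext) simp
  then show ?thesis
  unfolding sc_def mult_single0_right mult_map_scale_conv_mult[symmetric] by simp
qed

lemma sc_mult: "sc a * sc b = sc (a * b)"
  by (simp add: sc_def mult_single)

lemma sc_assoc: "sc a * (sc b * x) = sc (a * b) * x"
  by (simp add: sc_mult mult.assoc[symmetric])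

lemma sc_left_comm: "x * (sc c * y) = sc c * (x * y)"
  by (metis sc_comm mult.assoc)

lemma sc_add: "sc (a + b) = sc a + sc b"
  by (simp add: sc_def single_add)

lemma sc_diff: "sc (a - b) = sc a - sc b"
  by (simp add: sc_def single_diff)

lemma sc_0[simp]: "sc 0 = 0"
  by (simp add: sc_def)

lemma sc_1[simp]: "sc 1 = 1"
  by (simp add: sc_def)

lemma sc_uminus: "sc (- a) = - sc a"
  by (simp add: sc_def single_uminus)

lemma sc_sum: "sc (sum f S) = (\<Sum>x\<in>S. sc (f x))"
  by (induction S rule: infinite_finite_induct) (auto simp: sc_add)

lemma lookup_single': "Poly_Mapping.lookup (Poly_Mapping.single k v) k' = (if k' = k then v else 0)"
  by (simp add: lookup_single when_def)

lemma one_single: "(1::fa) = Poly_Mapping.single (Wd []) 1"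
  by (simp add: zero_word_def[symmetric])

section \<open>The ideal Rel\<close>

lemma rels_Rel: "x \<in> rels q \<Longrightarrow> x \<in> Rel q"
  unfolding Rel_def by (simp add: subset_iff)

lemma Rel_0: "0 \<in> Rel q"
  unfolding Rel_def by simp

lemma Rel_add: "x \<in> Rel q \<Longrightarrow> y \<in> Rel q \<Longrightarrow> x + y \<in> Rel q"
  unfolding Rel_def by simp

lemma Rel_mult: "x \<in> Rel q \<Longrightarrow> a * x * b \<in> Rel q"
  unfolding Rel_def by simp

lemma Rel_tt: "rtt q tser tser a b c d m n \<in> Rel q"
proof (rule rels_Rel)
  have h: "rtt q tser tser a b c d m n \<in> {rtt q tser tser a b c d m n | a b c d m n. True}" by blast
  show "rtt q tser tser a b c d m n \<in> rels q" unfolding rels_def by ((rule UnI1), (rule UnI1), rule UnI2, rule h)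
qed

lemma Rel_bb: "rtt q tbser tbser a b c d m n \<in> Rel q"
proof (rule rels_Rel)
  have h: "rtt q tbser tbser a b c d m n \<in> {rtt q tbser tbser a b c d m n | a b c d m n. True}" by blast
  show "rtt q tbser tbser a b c d m n \<in> rels q" unfolding rels_def by ((rule UnI1), rule UnI2, rule h)
qed

lemma Rel_bt: "rtt q tbser tser a b c d m n \<in> Rel q"
proof (rule rels_Rel)
  have h: "rtt q tbser tser a b c d m n \<in> {rtt q tbser tser a b c d m n | a b c d m n. True}" by blast
  show "rtt q tbser tser a b c d m n \<in> rels q" unfolding rels_def by (rule UnI2, rule h)
qed

lemma Rel_t12: "gn (Tg I1 I2 0) \<in> Rel q"
proof (rule rels_Rel)
  have h: "gn (Tg I1 I2 0) \<in> {gn (Tg I1 I2 0), gn (TBg I2 I1 0)}" by simp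
  show "gn (Tg I1 I2 0) \<in> rels q" unfolding rels_def by ((rule UnI1), (rule UnI1), (rule UnI1), (rule UnI1), (rule UnI1), (rule UnI1), (rule UnI1), (rule UnI1), rule h)
qed

lemma Rel_b21: "gn (TBg I2 I1 0) \<in> Rel q"
proof (rule rels_Rel)
  have h: "gn (TBg I2 I1 0) \<in> {gn (Tg I1 I2 0), gn (TBg I2 I1 0)}" by simp
  show "gn (TBg I2 I1 0) \<in> rels q" unfolding rels_def by ((rule UnI1), (rule UnI1), (rule UnI1), (rule UnI1), (rule UnI1), (rule UnI1), (rule UnI1), (rule UnI1), rule h)
qed

lemma Rel_inv1: "gn (Tg i i 0) * gn (TinvG i) - 1 \<in> Rel q"
proof (rule rels_Rel)
  have h: "gn (Tg i i 0) * gn (TinvG i) - 1 \<in> {gn (Tg i i 0) * gn (TinvG i) - 1 | i. True}" by blast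
  show "gn (Tg i i 0) * gn (TinvG i) - 1 \<in> rels q" unfolding rels_def by ((rule UnI1), (rule UnI1), (rule UnI1), (rule UnI1), (rule UnI1), (rule UnI1), rule UnI2, rule h)
qed

lemma Rel_inv2: "gn (TinvG i) * gn (Tg i i 0) - 1 \<in> Rel q"
proof (rule rels_Rel)
  have h: "gn (TinvG i) * gn (Tg i i 0) - 1 \<in> {gn (TinvG i) * gn (Tg i i 0) - 1 | i. True}" by blast
  show "gn (TinvG i) * gn (Tg i i 0) - 1 \<in> rels q" unfolding rels_def by ((rule UnI1), (rule UnI1), (rule UnI1), (rule UnI1), (rule UnI1), rule UnI2, rule h)
qed

lemma Rel_inv3: "gn (TBg i i 0) * gn (TBinvG i) - 1 \<in> Rel q"
proof (rule rels_Rel)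
  have h: "gn (TBg i i 0) * gn (TBinvG i) - 1 \<in> {gn (TBg i i 0) * gn (TBinvG i) - 1 | i. True}" by blast
  show "gn (TBg i i 0) * gn (TBinvG i) - 1 \<in> rels q" unfolding rels_def by ((rule UnI1), (rule UnI1), (rule UnI1), (rule UnI1), rule UnI2, rule h)
qed

lemma Rel_inv4: "gn (TBinvG i) * gn (TBg i i 0) - 1 \<in> Rel q"
proof (rule rels_Rel)
  have h: "gn (TBinvG i) * gn (TBg i i 0) - 1 \<in> {gn (TBinvG i) * gn (TBg i i 0) - 1 | i. True}" by blast
  show "gn (TBinvG i) * gn (TBg i i 0) - 1 \<in> rels q" unfolding rels_def by ((rule UnI1), (rule UnI1), (rule UnI1), rule UnI2, rule h)
qed

lemma Rel_sc: "x \<in> Rel q \<Longrightarrow> sc c * x \<in> Rel q"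
  using Rel_mult[of x q "sc c" 1] by simp

lemma Rel_rmult: "x \<in> Rel q \<Longrightarrow> x * b \<in> Rel q"
  using Rel_mult[of x q 1 b] by simp

lemma Rel_lmult: "x \<in> Rel q \<Longrightarrow> a * x \<in> Rel q"
  using Rel_mult[of x q a 1] by simp

lemma Rel_neg: "x \<in> Rel q \<Longrightarrow> - x \<in> Rel q"
  using Rel_sc[of x q "-1"] by (simp add: sc_uminus)

lemma Rel_diff: "x \<in> Rel q \<Longrightarrow> y \<in> Rel q \<Longrightarrow> x - y \<in> Rel q"
  unfolding diff_conv_add_uminus by (intro Rel_add Rel_neg)

lemma E1_eq: assumes "q \<noteq> 0" shows "sbcoef q I2 I1 0 + sc (inverse q) * scoef q I1 I2 0 = sc ((1) * q ^ 1) * (1) * (gn (TBg I2 I1 0)) * (gn (Tg I1 I2 0)) + sc ((1) * 1) * (1) * (rtt q tbser tser I2 I1 I2 I1 0 1) * (1) + sc ((-1) * q ^ 1) * (1) * (gn (Tg I1 I2 0)) * (gn (TBg I2 I1 0))"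
  apply (simp add: scoef_def sbcoef_def rtt_def ixs_def Rent_def tser_def tbser_def)
  apply (simp add: gn_def sc_def mult_single zero_word_def algebra_simps)
  apply (rule poly_mapping_eqI)
  subgoal for w
  apply (cases "w \<in> {Wd [TBg I2 I1 0, Tg I1 I2 0], Wd [TBg I2 I2 0, Tg I1 I1 0], Wd [Tg I1 I1 0, TBg I2 I2 0], Wd [Tg I1 I2 0, TBg I2 I1 0]}")
   apply (simp only: insert_iff empty_iff)
   apply (elim disjE)
   apply (simp_all add: lookup_add lookup_minus lookup_single')
   using assms apply (simp_all add: field_simps eval_nat_numeral)
  done
  done

lemma E1: assumes "q \<noteq> 0" shows "sbcoef q I2 I1 0 + sc (inverse q) * scoef q I1 I2 0 \<in> Rel q"
  unfolding E1_eq[OF assms]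
  by (intro Rel_add Rel_mult Rel_tt Rel_bb Rel_bt Rel_t12 Rel_b21)

lemma E2_eq: assumes "q \<noteq> 0" shows "scoef q I1 I2 0 * scoef q I2 I2 0 - sc (inverse q ^ 2) * (scoef q I2 I2 0 * scoef q I1 I2 0) = sc ((-1) * q ^ 1) * (gn (Tg I1 I1 0)) * (rtt q tbser tser I2 I2 I2 I1 0 1) * (gn (TBg I2 I2 0)) + sc ((-1) * q ^ 1) * (gn (Tg I1 I1 0) * gn (TBg I2 I2 0) * gn (Tg I2 I2 0)) * (gn (TBg I2 I1 0)) * (1) + sc ((-1) * q ^ 1) * (1) * (gn (Tg I1 I2 0)) * (gn (TBg I2 I1 0) * gn (Tg I2 I1 0) * gn (TBg I2 I2 0)) + sc ((1) * 1) * (1) * (gn (Tg I1 I2 0)) * (gn (TBg I2 I1 0) * gn (Tg I2 I2 0) * gn (TBg I2 I1 0)) + sc ((1) * 1) * (gn (Tg I2 I1 0)) * (rtt q tbser tser I2 I1 I2 I1 0 1) * (gn (TBg I2 I2 0)) + sc ((1) * inverse q ^ 1) * (gn (Tg I2 I1 0) * gn (TBg I2 I2 0)) * (gn (Tg I1 I2 0)) * (gn (TBg I2 I1 0)) + sc ((1) * inverse q ^ 1) * (gn (Tg I2 I2 0)) * (gn (TBg I2 I1 0)) * (gn (Tg I1 I1 0) * gn (TBg I2 I2 0)) + sc ((-1) * inverse q ^ 2) * (gn (Tg I2 I2 0)) * (gn (TBg I2 I1 0)) * (gn (Tg I1 I2 0) * gn (TBg I2 I1 0)) + sc ((-1) *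 1 + (1) * q ^ 2) * (gn (Tg I1 I1 0) * gn (Tg I2 I2 0)) * (gn (TBg I2 I1 0)) * (gn (TBg I2 I2 0)) + sc ((1) * inverse q ^ 1 + (-1) * q ^ 1) * (gn (Tg I2 I1 0)) * (gn (Tg I1 I2 0)) * (gn (TBg I2 I1 0) * gn (TBg I2 I2 0)) + sc ((1) * q ^ 1) * (1) * (rtt q tser tser I1 I2 I1 I1 1 0) * (gn (TBg I2 I2 0) * gn (TBg I2 I2 0))"
  apply (simp add: scoef_def sbcoef_def rtt_def ixs_def Rent_def tser_def tbser_def)
  apply (simp add: gn_def sc_def mult_single zero_word_def algebra_simps)
  apply (rule poly_mapping_eqI)
  subgoal for w
  apply (cases "w \<in> {Wd [Tg I1 I1 0, TBg I2 I2 0, Tg I2 I1 0, TBg I2 I2 0], Wd [Tg I1 I1 0, TBg I2 I2 0, Tg I2 I2 0, TBg I2 I1 0], Wd [Tg I1 I1 0, Tg I2 I1 0, TBg I2 I2 0, TBg I2 I2 0], Wd [Tg I1 I1 0, Tg I2 I2 0, TBg I2 I1 0, TBg I2 I2 0], Wd [Tg I1 I2 0, TBg I2 I1 0, Tg I2 I1 0, TBg I2 I2 0], Wd [Tg I1 I2 0, TBg I2 I1 0, Tg I2 I2 0, TBg I2 I1 0], Wd [Tg I2 I1 0, TBg I2 I2 0, Tg I1 I1 0, TBg I2 I2 0], Wd [Tg I2 I1 0, TBg I2 I2 0, Tg I1 I2 0, TBg I2 I1 0], Wd [Tg I2 I1 0, Tg I1 I1 0, TBg I2 I2 0, TBg I2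 I2 0], Wd [Tg I2 I1 0, Tg I1 I2 0, TBg I2 I1 0, TBg I2 I2 0], Wd [Tg I2 I2 0, TBg I2 I1 0, Tg I1 I1 0, TBg I2 I2 0], Wd [Tg I2 I2 0, TBg I2 I1 0, Tg I1 I2 0, TBg I2 I1 0]}")
   apply (simp only: insert_iff empty_iff)
   apply (elim disjE)
   apply (simp_all add: lookup_add lookup_minus lookup_single')
   using assms apply (simp_all add: field_simps eval_nat_numeral)
  done
  done

lemma E2: assumes "q \<noteq> 0" shows "scoef q I1 I2 0 * scoef q I2 I2 0 - sc (inverse q ^ 2) * (scoef q I2 I2 0 * scoef q I1 I2 0) \<in> Rel q"
  unfolding E2_eq[OF assms]
  by (intro Rel_add Rel_mult Rel_tt Rel_bb Rel_bt Rel_t12 Rel_b21)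

lemma E3_eq: assumes "q \<noteq> 0" shows "scoef q I2 I1 0 * scoef q I2 I2 0 - scoef q I2 I2 0 * scoef q I2 I1 0 - sc (inverse q - q) * (scoef q I2 I2 0 * scoef q I1 I2 0) = sc ((-1) * q ^ 2) * (gn (Tg I2 I1 0)) * (rtt q tbser tser I1 I2 I2 I1 0 1) * (gn (TBg I2 I2 0)) + sc ((-1) * q ^ 1) * (gn (Tg I2 I1 0) * gn (TBg I1 I2 0) * gn (Tg I2 I2 0)) * (gn (TBg I2 I1 0)) * (1) + sc ((1) * q ^ 1) * (gn (Tg I2 I2 0)) * (rtt q tbser tser I1 I2 I1 I1 0 1) * (gn (TBg I2 I2 0)) + sc ((1) * 1) * (gn (Tg I2 I2 0) * gn (TBg I1 I1 0) * gn (Tg I2 I2 0)) * (gn (TBg I2 I1 0)) * (1) + sc ((1) * q ^ 1) * (gn (Tg I2 I1 0)) * (rtt q tbser tser I2 I2 I2 I1 0 1) * (gn (TBg I1 I2 0)) + sc ((-1) * 1) * (gn (Tg I2 I1 0)) * (rtt q tbser tser I2 I2 I2 I2 0 1) * (gn (TBg I1 I1 0)) + sc ((1) * q ^ 1) * (gn (Tg I2 I2 0)) * (gn (TBg I2 I1 0)) * (gn (Tg I2 I1 0) * gn (TBg I1 I2 0)) + sc ((-1) * 1) * (gn (Tg I2 I2 0)) * (gn (TBg I2 I1 0)) * (gn (Tg I2 I2 0) * gn (TBg I1 I1 0)) + sc ((1) * 1 + (-1) * q ^ 2) * (gn (Tg I2 I1 0) * gn (TBg I2 I2 0)) * (gn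 (Tg I1 I2 0)) * (gn (TBg I2 I1 0)) + sc ((-1) * inverse q ^ 1 + (1) * q ^ 1) * (gn (Tg I2 I2 0)) * (gn (TBg I2 I1 0)) * (gn (Tg I1 I2 0) * gn (TBg I2 I1 0)) + sc ((1) * q ^ 2) * (1) * (rtt q tser tser I2 I2 I1 I2 1 0) * (gn (TBg I1 I1 0) * gn (TBg I2 I2 0)) + sc ((1) * 1 + (-1) * q ^ 2) * (gn (Tg I2 I1 0) * gn (Tg I2 I2 0)) * (gn (TBg I2 I1 0)) * (gn (TBg I1 I2 0)) + sc ((1) * q ^ 2) * (gn (Tg I2 I1 0) * gn (Tg I2 I1 0)) * (rtt q tbser tbser I1 I2 I2 I2 1 0) * (1) + sc ((-1) * q ^ 1) * (gn (Tg I2 I1 0) * gn (Tg I2 I2 0)) * (rtt q tbser tbser I1 I2 I1 I2 1 0) * (1) + sc ((-1) * 1 + (1) * q ^ 2) * (gn (Tg I2 I1 0) * gn (Tg I2 I2 0)) * (gn (TBg I2 I1 0)) * (gn (TBg I1 I2 0))"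
  apply (simp add: scoef_def sbcoef_def rtt_def ixs_def Rent_def tser_def tbser_def)
  apply (simp add: gn_def sc_def mult_single zero_word_def algebra_simps)
  apply (rule poly_mapping_eqI)
  subgoal for w
  apply (cases "w \<in> {Wd [Tg I2 I1 0, TBg I1 I2 0, Tg I2 I1 0, TBg I2 I2 0], Wd [Tg I2 I1 0, TBg I1 I2 0, Tg I2 I2 0, TBg I2 I1 0], Wd [Tg I2 I1 0, TBg I2 I2 0, Tg I1 I1 0, TBg I2 I2 0], Wd [Tg I2 I1 0, TBg I2 I2 0, Tg I1 I2 0, TBg I2 I1 0], Wd [Tg I2 I1 0, TBg I2 I2 0, Tg I2 I1 0, TBg I1 I2 0], Wd [Tg I2 I1 0, TBg I2 I2 0, Tg I2 I2 0, TBg I1 I1 0], Wd [Tg I2 I1 0, Tg I2 I1 0, TBg I1 I2 0, TBg I2 I2 0], Wd [Tg I2 I1 0, Tg I2 I1 0, TBg I2 I2 0, TBg I1 I2 0], Wd [Tg I2 I1 0, Tg I2 I2 0, TBg I1 I1 0, TBg I2 I2 0], Wd [Tg I2 I1 0, Tg I2 I2 0, TBg I2 I1 0, TBg I1 I2 0], Wd [Tg I2 I1 0, Tg I2 I2 0, TBg I2 I2 0, TBg I1 I1 0], Wd [Tg I2 I2 0, TBg I1 I1 0, Tg I2 I1 0, TBg I2 I2 0], Wd [Tg I2 I2 0, TBg I1 I1 0, Tg I2 I2 0, TBg I2 I1 0], Wd [Tg I2 I2 0, TBg I2 I1 0, Tg I1 I1 0, TBg I2 I2 0], Wd [Tg I2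 I2 0, TBg I2 I1 0, Tg I1 I2 0, TBg I2 I1 0], Wd [Tg I2 I2 0, TBg I2 I1 0, Tg I2 I1 0, TBg I1 I2 0], Wd [Tg I2 I2 0, TBg I2 I1 0, Tg I2 I2 0, TBg I1 I1 0], Wd [Tg I2 I2 0, Tg I2 I1 0, TBg I1 I1 0, TBg I2 I2 0]}")
   apply (simp only: insert_iff empty_iff)
   apply (elim disjE)
   apply (simp_all add: lookup_add lookup_minus lookup_single')
   using assms apply (simp_all add: field_simps eval_nat_numeral)
  done
  done

lemma E3: assumes "q \<noteq> 0" shows "scoef q I2 I1 0 * scoef q I2 I2 0 - scoef q I2 I2 0 * scoef q I2 I1 0 - sc (inverse q - q) * (scoef q I2 I2 0 * scoef q I1 I2 0) \<in> Rel q"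
  unfolding E3_eq[OF assms]
  by (intro Rel_add Rel_mult Rel_tt Rel_bb Rel_bt Rel_t12 Rel_b21)

lemma E4_eq: assumes "q \<noteq> 0" shows "scoef q I1 I1 0 * scoef q I2 I2 0 - scoef q I2 I2 0 * scoef q I1 I1 0 - sc (1 - q^2) * (scoef q I2 I1 0 * scoef q I1 I2 0 + sc (inverse q) * (scoef q I1 I2 0 * scoef q I1 I2 0)) = sc ((-1) * q ^ 2) * (gn (Tg I1 I1 0)) * (rtt q tbser tser I1 I2 I2 I1 0 1) * (gn (TBg I2 I2 0)) + sc ((-1) * q ^ 1) * (gn (Tg I1 I1 0) * gn (TBg I1 I2 0) * gn (Tg I2 I2 0)) * (gn (TBg I2 I1 0)) * (1) + sc ((-1) * q ^ 1) * (1) * (gn (Tg I1 I2 0)) * (gn (TBg I1 I1 0) * gn (Tg I2 I1 0) * gn (TBg I2 I2 0)) + sc ((1) * 1) * (1) * (gn (Tg I1 I2 0)) * (gn (TBg I1 I1 0) * gn (Tg I2 I2 0) * gn (TBg I2 I1 0)) + sc ((1) * q ^ 2) * (gn (Tg I2 I1 0)) * (rtt q tbser tser I2 I1 I2 I1 0 1) * (gn (TBg I1 I2 0)) + sc ((1) * q ^ 1) * (gn (Tg I2 I1 0) * gn (TBg I2 I2 0)) * (gn (Tg I1 I2 0)) * (gn (TBg I1 I1 0)) + sc ((1) * q ^ 1) * (gn (Tg I2 I2 0)) * (gn (TBg I2 I1 0)) * (gn (Tg I1 I1 0) * gn (TBg I1 I2 0)) + sc ((-1) * 1) * (gn (Tg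 I2 I2 0)) * (gn (TBg I2 I1 0)) * (gn (Tg I1 I2 0) * gn (TBg I1 I1 0)) + sc ((1) * q ^ 1 + (-1) * q ^ 3) * (gn (Tg I2 I1 0)) * (rtt q tbser tser I1 I1 I2 I1 0 1) * (gn (TBg I2 I2 0)) + sc ((1) * q ^ 1 + (-1) * q ^ 3) * (gn (Tg I2 I1 0) * gn (TBg I1 I2 0)) * (gn (Tg I1 I2 0)) * (gn (TBg I2 I1 0)) + sc ((-1) * 1 + (1) * q ^ 2) * (gn (Tg I2 I2 0)) * (rtt q tbser tser I1 I1 I1 I1 0 1) * (gn (TBg I2 I2 0)) + sc ((-1) * 1 + (1) * q ^ 2) * (gn (Tg I2 I2 0) * gn (TBg I1 I1 0)) * (gn (Tg I1 I2 0)) * (gn (TBg I2 I1 0)) + sc ((1) * 1 + (-1) * q ^ 2) * (gn (Tg I1 I1 0) * gn (TBg I2 I2 0)) * (gn (Tg I1 I2 0)) * (gn (TBg I2 I1 0)) + sc ((1) * 1 + (-1) * q ^ 2) * (1) * (gn (Tg I1 I2 0)) * (gn (TBg I2 I1 0) * gn (Tg I1 I1 0) * gn (TBg I2 I2 0)) + sc ((-1) * inverse q ^ 1 + (1) * q ^ 1) * (1) * (gn (Tg I1 I2 0)) * (gn (TBg I2 I1 0) * gn (Tg I1 I2 0) * gn (TBg I2 I1 0)) + sc ((1) * q ^ 1 + (-1) * q ^ 3) * (gn (Tg I2 I1 0)) * (gn (Tg I1 I2 0)) * (gn (TBg I2 I1 0) * gn (TBg I1 I2 0)) + sc ((1) *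 q ^ 3) * (1) * (rtt q tser tser I1 I2 I1 I1 1 0) * (gn (TBg I2 I2 0) * gn (TBg I1 I2 0)) + sc ((1) * 1 + (-2) * q ^ 2 + (1) * q ^ 4) * (gn (Tg I2 I1 0)) * (gn (Tg I1 I2 0)) * (gn (TBg I1 I1 0) * gn (TBg I2 I2 0)) + sc ((1) * q ^ 2 + (-1) * q ^ 4) * (1) * (rtt q tser tser I1 I2 I1 I1 1 0) * (gn (TBg I1 I2 0) * gn (TBg I2 I2 0)) + sc ((-1) * q ^ 1 + (1) * q ^ 3) * (1) * (rtt q tser tser I1 I2 I1 I2 1 0) * (gn (TBg I1 I1 0) * gn (TBg I2 I2 0)) + sc ((1) * q ^ 4) * (gn (Tg I1 I1 0) * gn (Tg I2 I1 0)) * (rtt q tbser tbser I1 I2 I2 I2 1 0) * (1) + sc ((-1) * 1 + (2) * q ^ 2 + (-1) * q ^ 4) * (gn (Tg I2 I1 0)) * (gn (Tg I1 I2 0)) * (gn (TBg I1 I1 0) * gn (TBg I2 I2 0))"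
  apply (simp add: scoef_def sbcoef_def rtt_def ixs_def Rent_def tser_def tbser_def)
  apply (simp add: gn_def sc_def mult_single zero_word_def algebra_simps)
  apply (rule poly_mapping_eqI)
  subgoal for w
  apply (cases "w \<in> {Wd [Tg I1 I1 0, TBg I1 I2 0, Tg I2 I1 0, TBg I2 I2 0], Wd [Tg I1 I1 0, TBg I1 I2 0, Tg I2 I2 0, TBg I2 I1 0], Wd [Tg I1 I1 0, TBg I2 I2 0, Tg I1 I1 0, TBg I2 I2 0], Wd [Tg I1 I1 0, TBg I2 I2 0, Tg I1 I2 0, TBg I2 I1 0], Wd [Tg I1 I1 0, Tg I2 I1 0, TBg I1 I2 0, TBg I2 I2 0], Wd [Tg I1 I1 0, Tg I2 I1 0, TBg I2 I2 0, TBg I1 I2 0], Wd [Tg I1 I1 0, Tg I2 I2 0, TBg I1 I1 0, TBg I2 I2 0], Wd [Tg I1 I2 0, TBg I1 I1 0, Tg I2 I1 0, TBg I2 I2 0], Wd [Tg I1 I2 0, TBg I1 I1 0, Tg I2 I2 0, TBg I2 I1 0], Wd [Tg I1 I2 0, TBg I2 I1 0, Tg I1 I1 0, TBg I2 I2 0], Wd [Tg I1 I2 0, TBg I2 I1 0, Tg I1 I2 0, TBg I2 I1 0], Wd [Tg I2 I1 0, TBg I1 I2 0, Tg I1 I1 0, TBg I2 I2 0], Wd [Tg I2 I1 0, TBg I1 I2 0, Tg I1 I2 0, TBg I2 I1 0], Wd [Tg I2 I1 0, TBg I2 I2 0, Tg I1 I1 0, TBg I1 I2 0], Wd [Tg I2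 I1 0, TBg I2 I2 0, Tg I1 I2 0, TBg I1 I1 0], Wd [Tg I2 I1 0, Tg I1 I1 0, TBg I1 I2 0, TBg I2 I2 0], Wd [Tg I2 I1 0, Tg I1 I1 0, TBg I2 I2 0, TBg I1 I2 0], Wd [Tg I2 I1 0, Tg I1 I2 0, TBg I1 I1 0, TBg I2 I2 0], Wd [Tg I2 I1 0, Tg I1 I2 0, TBg I2 I1 0, TBg I1 I2 0], Wd [Tg I2 I2 0, TBg I1 I1 0, Tg I1 I1 0, TBg I2 I2 0], Wd [Tg I2 I2 0, TBg I1 I1 0, Tg I1 I2 0, TBg I2 I1 0], Wd [Tg I2 I2 0, TBg I2 I1 0, Tg I1 I1 0, TBg I1 I2 0], Wd [Tg I2 I2 0, TBg I2 I1 0, Tg I1 I2 0, TBg I1 I1 0], Wd [Tg I2 I2 0, Tg I1 I1 0, TBg I1 I1 0, TBg I2 I2 0]}")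
   apply (simp only: insert_iff empty_iff)
   apply (elim disjE)
   apply (simp_all add: lookup_add lookup_minus lookup_single')
   using assms apply (simp_all add: field_simps eval_nat_numeral)
  done
  done

lemma E4: assumes "q \<noteq> 0" shows "scoef q I1 I1 0 * scoef q I2 I2 0 - scoef q I2 I2 0 * scoef q I1 I1 0 - sc (1 - q^2) * (scoef q I2 I1 0 * scoef q I1 I2 0 + sc (inverse q) * (scoef q I1 I2 0 * scoef q I1 I2 0)) \<in> Rel q"
  unfolding E4_eq[OF assms]
  by (intro Rel_add Rel_mult Rel_tt Rel_bb Rel_bt Rel_t12 Rel_b21)

lemma E5a_eq: assumes "q \<noteq> 0" shows
  "(sc (inverse q) * gn (TBinvG I2) * gn (TinvG I1)) * scoef q I1 I2 0 - 1
   = gn (TBinvG I2) * (gn (TinvG I1) * gn (Tg I1 I1 0) - 1) * gn (TBg I2 I2 0)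
     + (gn (TBinvG I2) * gn (TBg I2 I2 0) - 1)
     + (sc (- inverse q) * gn (TBinvG I2) * gn (TinvG I1)) * gn (Tg I1 I2 0) * gn (TBg I2 I1 0)"
  apply (simp add: scoef_def)
  apply (simp add: gn_def sc_def mult_single zero_word_def algebra_simps one_single)
  apply (rule poly_mapping_eqI)
  subgoal for w
  apply (cases "w \<in> {Wd [TBinvG I2, TinvG I1, Tg I1 I1 0, TBg I2 I2 0], Wd [TBinvG I2, TBg I2 I2 0], Wd [],
        Wd [TBinvG I2, TinvG I1, Tg I1 I2 0, TBg I2 I1 0]}")
   apply (simp only: insert_iff empty_iff)
   apply (elim disjE)
   apply (simp_all add: lookup_add lookup_minus lookup_single')
   using assms apply (simp_all add: field_simps eval_nat_numeral)
  done
  done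

lemma E5b_eq: assumes "q \<noteq> 0" shows
  "scoef q I1 I2 0 * (sc (inverse q) * gn (TBinvG I2) * gn (TinvG I1)) - 1
   = gn (Tg I1 I1 0) * (gn (TBg I2 I2 0) * gn (TBinvG I2) - 1) * gn (TinvG I1)
     + (gn (Tg I1 I1 0) * gn (TinvG I1) - 1)
     + sc (- inverse q) * gn (Tg I1 I2 0) * (gn (TBg I2 I1 0) * gn (TBinvG I2) * gn (TinvG I1))"
  apply (simp add: scoef_def)
  apply (simp add: gn_def sc_def mult_single zero_word_def algebra_simps one_single)
  apply (rule poly_mapping_eqI)
  subgoal for w
  apply (cases "w \<in> {Wd [Tg I1 I1 0, TBg I2 I2 0, TBinvG I2, TinvG I1], Wd [Tg I1 I1 0, TinvG I1], Wd [],
        Wd [Tg I1 I2 0, TBg I2 I1 0, TBinvG I2, TinvG I1]}")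
   apply (simp only: insert_iff empty_iff)
   apply (elim disjE)
   apply (simp_all add: lookup_add lookup_minus lookup_single')
   using assms apply (simp_all add: field_simps eval_nat_numeral)
  done
  done

lemma E5a: assumes "q \<noteq> 0" shows
  "(sc (inverse q) * gn (TBinvG I2) * gn (TinvG I1)) * scoef q I1 I2 0 - 1 \<in> Rel q"
  unfolding E5a_eq[OF assms]
  by (intro Rel_add Rel_mult Rel_inv1 Rel_inv2 Rel_inv3 Rel_inv4 Rel_t12)

lemma E5b: assumes "q \<noteq> 0" shows
  "scoef q I1 I2 0 * (sc (inverse q) * gn (TBinvG I2) * gn (TinvG I1)) - 1 \<in> Rel q"
  unfolding E5b_eq[OF assms]
  by (intro Rel_add Rel_mult Rel_inv1 Rel_inv2 Rel_inv3 Rel_inv4 Rel_t12)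

section \<open>Linear algebra\<close>

lemma lin_dep:
  fixes M :: "nat \<Rightarrow> 'a \<Rightarrow> complex"
  assumes "finite F"
  shows "finite S \<Longrightarrow> card F < card S \<Longrightarrow>
    \<exists>c. (\<exists>k\<in>S. c k \<noteq> 0) \<and> (\<forall>f\<in>F. (\<Sum>k\<in>S. c k * M k f) = 0)"
  using assms
proof (induction F arbitrary: S M rule: finite_induct)
  case empty
  then obtain k where "k \<in> S" by (metis card.empty card_gt_0_iff ex_in_conv)
  then show ?case by (rule_tac x="\<lambda>_. 1" in exI) auto
next
  case (insert g F)
  show ?case
  proof (cases "\<forall>k\<in>S. M k g = 0")
    case True
    have "card F < card S" using insert by simp
    from insert.IH[OF insert.prems(1) this] obtain c where
      c: "\<exists>k\<in>S. c k \<noteq> 0" "\<forall>f\<in>F. (\<Sum>k\<in>S. c k * M k f) = 0" by blast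
    then show ?thesis using True by (rule_tac x=c in exI) auto
  next
    case False
    then obtain k0 where k0: "k0 \<in> S" "M k0 g \<noteq> 0" by blast
    define S' where "S' = S - {k0}"
    define M' where "M' k f = M k f - (M k g / M k0 g) * M k0 f" for k f
    have fS': "finite S'" using insert S'_def by simp
    have cS': "card F < card S'" using insert k0 S'_def by (simp add: card_Diff_singleton)
    from insert.IH[OF fS' cS', of M'] obtain c' where
      c': "\<exists>k\<in>S'. c' k \<noteq> 0" "\<forall>f\<in>F. (\<Sum>k\<in>S'. c' k * M' k f) = 0" by blast
    define c where "c k = (if k = k0 then - (\<Sum>j\<in>S'. c' j * M j g) / M k0 g else c' k)" for k
    have split: "(\<Sum>k\<in>S. c k * M k f) = c k0 * M k0 f + (\<Sum>k\<in>S'. c' k * M k f)" for f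
    proof -
      have "(\<Sum>k\<in>S. c k * M k f) = c k0 * M k0 f + (\<Sum>k\<in>S'. c k * M k f)"
        unfolding S'_def using insert.prems(1) k0(1) by (rule sum.remove)
      also have "(\<Sum>k\<in>S'. c k * M k f) = (\<Sum>k\<in>S'. c' k * M k f)"
        by (rule sum.cong) (auto simp: c_def S'_def)
      finally show ?thesis .
    qed
    have "\<forall>f\<in>insert g F. (\<Sum>k\<in>S. c k * M k f) = 0"
    proof
      fix f assume f: "f \<in> insert g F"
      show "(\<Sum>k\<in>S. c k * M k f) = 0"
      proof (cases "f = g")
        case True
        then show ?thesis unfolding split using k0 by (simp add: c_def)
      next
        case False
        then have "f \<in> F" using f by simp
        then have "(\<Sum>k\<in>S'. c' k * M' k f) = 0" using c' by blast
        then have "(\<Sum>k\<in>S'. c' k * M k f) - (\<Sum>k\<in>S'. c' k * M k g) / M k0 g * M k0 f = 0"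
          unfolding M'_def by (simp add: algebra_simps sum_subtractf sum_distrib_left sum_divide_distrib sum_distrib_right)
        then show ?thesis unfolding split using k0 by (simp add: c_def field_simps)
      qed
    qed
    moreover have "\<exists>k\<in>S. c k \<noteq> 0" using c' by (auto simp: c_def S'_def)
    ultimately show ?thesis by blast
  qed
qed

lemma Yp_Rel: "x \<in> Rel q \<Longrightarrow> x \<in> Yp q"
  unfolding Yp_def by blast
lemma Yp_scoef: "scoef q i j k \<in> Yp q"
  unfolding Yp_def by blast
lemma Yp_inv: "x * scoef q I1 I2 0 - 1 \<in> Rel q \<Longrightarrow> scoef q I1 I2 0 * x - 1 \<in> Rel q \<Longrightarrow> x \<in> Yp q"
  unfolding Yp_def by blast
lemma Yp_1: "1 \<in> Yp q"
  unfolding Yp_def by blast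
lemma Yp_sc: "x \<in> Yp q \<Longrightarrow> sc c * x \<in> Yp q"
  unfolding Yp_def by blast
lemma Yp_add: "x \<in> Yp q \<Longrightarrow> y \<in> Yp q \<Longrightarrow> x + y \<in> Yp q"
  unfolding Yp_def by blast
lemma Yp_mult: "x \<in> Yp q \<Longrightarrow> y \<in> Yp q \<Longrightarrow> x * y \<in> Yp q"
  unfolding Yp_def by blast
lemma Yp_scalar: "sc c \<in> Yp q"
  using Yp_sc[OF Yp_1[of q], of c] by simp
lemma Yp_diff: "x \<in> Yp q \<Longrightarrow> y \<in> Yp q \<Longrightarrow> x - y \<in> Yp q"
  using Yp_add[OF _ Yp_sc[of y q "-1"], of x] by (simp add: sc_uminus)
lemma Yp_pow: "x \<in> Yp q \<Longrightarrow> x ^ n \<in> Yp q"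
  by (induction n) (auto intro: Yp_1 Yp_mult)

locale lid =
  fixes q :: complex and J :: "fa set"
  assumes lideal: "lideal q J"
begin

lemma J_Rel: "x \<in> Rel q \<Longrightarrow> x \<in> J"
  using lideal unfolding lideal_def by blast
lemma J_Yp: "x \<in> J \<Longrightarrow> x \<in> Yp q"
  using lideal unfolding lideal_def by blast
lemma J_add: "x \<in> J \<Longrightarrow> y \<in> J \<Longrightarrow> x + y \<in> J"
  using lideal unfolding lideal_def by blast
lemma J_mult: "a \<in> Yp q \<Longrightarrow> x \<in> J \<Longrightarrow> a * x \<in> J"
  using lideal unfolding lideal_def by blast
lemma J_0: "0 \<in> J"
  by (rule J_Rel[OF Rel_0])
lemma J_sc: "x \<in> J \<Longrightarrow> sc c * x \<in> J"
  by (rule J_mult[OF Yp_scalar])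
lemma J_neg: "x \<in> J \<Longrightarrow> - x \<in> J"
  using J_sc[of x "-1"] by (simp add: sc_uminus)
lemma J_diff: "x \<in> J \<Longrightarrow> y \<in> J \<Longrightarrow> x - y \<in> J"
  unfolding diff_conv_add_uminus by (intro J_add J_neg)
lemma J_sum: "finite S \<Longrightarrow> (\<And>k. k \<in> S \<Longrightarrow> f k \<in> J) \<Longrightarrow> sum f S \<in> J"
  by (induction S rule: finite_induct) (auto intro: J_0 J_add)
lemma J_shift: "x \<in> J \<Longrightarrow> y - x \<in> Rel q \<Longrightarrow> y \<in> J"
  using J_add[of x "y - x"] J_Rel by simp
lemma J_Relmult: "x \<in> Rel q \<Longrightarrow> x * b \<in> J"
  by (intro J_Rel Rel_rmult)

end

lemma inv_pow_one: "(q::complex) \<noteq> 0 \<Longrightarrow> inverse q ^ n = 1 \<Longrightarrow> q ^ n = 1"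
  by (metis inverse_1 inverse_inverse_eq power_inverse)

lemma g_step: "(q::complex) * r = 1 \<Longrightarrow> - q * b * (1 - r^2 * x) = - q * b * (1 - x) + (r - q) * (b * x)"
  by algebra

lemma a_step: "(q::complex) * r = 1 \<Longrightarrow>
  - (b * b) * q ^ 3 * (r^2 * x - r^2 * x * (r^2 * x))
  = - (b * b) * q ^ 3 * (x - x * x) + (1 - q^2) * (b * x * (- q * b * (1 - x)) + r * (b * x * (b * x)))"
  by algebra


theorem proposition4p3:
  fixes q :: complex and mu mub :: "nat \<Rightarrow> complex" and J :: "fa set"
  assumes "q \<noteq> 0"
    and "\<forall>n::nat. n > 0 \<longrightarrow> q ^ n \<noteq> 1"
    and "irr_ideal q mu mub J"
    and "fin_dim_quot q J"
  shows "mu 0 \<noteq> 0 \<and> mub 0 \<noteq> 0"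
proof -
  have q0: "q \<noteq> 0" using assms(1) .
  have qn: "\<And>n. n > 0 \<Longrightarrow> q ^ n \<noteq> 1" using assms(2) by blast
  from assms(3) have lidJ: "lideal q J" and vg: "verma_gens q mu mub \<subseteq> J" and ne: "J \<noteq> Yp q"
    unfolding irr_ideal_def by auto
  interpret lid q J by (rule lid.intro, rule lidJ)
  define r where "r = inverse q"
  have r0: "r \<noteq> 0" using q0 r_def by simp
  have qr1: "q * r = 1" using q0 r_def by simp
  have qr: "sc q * (sc r * x) = x" for x using q0 by (simp add: sc_assoc r_def)
  define A where "A = scoef q I1 I1 0"
  define B where "B = scoef q I1 I2 0"
  define C where "C = scoef q I2 I1 0"
  define D where "D = scoef q I2 I2 0"
  define SB where "SB = sbcoef q I2 I1 0"
  define Bi where "Bi = sc (inverse q) * gn (TBinvG I2) * gn (TinvG I1)"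
  note scl = sc_left_comm[of A] sc_left_comm[of B] sc_left_comm[of C] sc_left_comm[of D]
  have YA: "A \<in> Yp q" unfolding A_def by (rule Yp_scoef)
  have YB: "B \<in> Yp q" unfolding B_def by (rule Yp_scoef)
  have YC: "C \<in> Yp q" unfolding C_def by (rule Yp_scoef)
  have YD: "D \<in> Yp q" unfolding D_def by (rule Yp_scoef)
  have YBi: "Bi \<in> Yp q" unfolding Bi_def by (rule Yp_inv[OF E5a[OF q0] E5b[OF q0]])
  have YDk: "D ^ k \<in> Yp q" for k by (rule Yp_pow[OF YD])
  have one_notin: "1 \<notin> J"
  proof
    assume "1 \<in> J"
    then have "y \<in> J" if "y \<in> Yp q" for y using J_mult[OF that, of 1] by simp
    then show False using ne J_Yp by blast
  qed
  have Binv: "Bi * B - 1 \<in> Rel q" using E5a[OF q0] unfolding Bi_def B_def .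
  have AJ: "A \<in> J" using vg unfolding verma_gens_def A_def by blast
  have CJ: "C - sc (mu 0) \<in> J" using vg unfolding verma_gens_def C_def by blast
  have SBJ: "SB - sc (mub 0) \<in> J" using vg unfolding verma_gens_def SB_def by blast
  have E1': "SB + sc r * B \<in> Rel q" using E1[OF q0] unfolding SB_def B_def r_def .
  define b where "b = - q * mub 0"
  have BJ: "B - sc b \<in> J"
  proof -
    have "B - sc b = sc q * (SB + sc r * B) - sc q * (SB - sc (mub 0))"
      by (simp add: algebra_simps qr b_def sc_mult sc_uminus)
    also have "\<dots> \<in> J" by (intro J_diff J_Rel Rel_sc E1' J_sc SBJ)
    finally show ?thesis .
  qed
  have mub0: "mub 0 \<noteq> 0"
  proof
    assume "mub 0 = 0"
    then have "B \<in> J" using BJ by (simp add: b_def)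
    then have "Bi * B \<in> J" by (rule J_mult[OF YBi])
    then have "Bi * B - (Bi * B - 1) \<in> J" by (rule J_diff[OF _ J_Rel[OF Binv]])
    then show False using one_notin by simp
  qed
  have b0: "b \<noteq> 0" using mub0 q0 by (simp add: b_def)
  have mu0: "mu 0 \<noteq> 0"
  proof
    assume mu00: "mu 0 = 0"
    have CJ0: "C \<in> J" using CJ mu00 by simp
    have E2': "B * D - sc (r ^ 2) * (D * B) \<in> Rel q"
      using E2[OF q0] unfolding B_def D_def r_def .
    have E3': "C * D - D * C - sc (r - q) * (D * B) \<in> Rel q"
      using E3[OF q0] unfolding B_def C_def D_def r_def .
    have E4': "A * D - D * A - sc (1 - q^2) * (C * B + sc r * (B * B)) \<in> Rel q"
      using E4[OF q0] unfolding A_def B_def C_def D_def r_def .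
    define \<beta> where "\<beta> k = b * r ^ (2 * k)" for k
    define \<gamma> where "\<gamma> k = - q * b * (1 - r ^ (2 * k))" for k
    define \<alpha> where "\<alpha> k = - (b * b) * q ^ 3 * (r ^ (2 * k) - r ^ (4 * k))" for k
    have P: "B * D ^ k - sc (\<beta> k) * D ^ k \<in> J" for k
    proof (induction k)
      case 0
      then show ?case using BJ by (simp add: \<beta>_def)
    next
      case (Suc k)
      have e: "r ^ (2 * Suc k) = r ^ 2 * r ^ (2 * k)" by (metis mult_Suc_right power_add)
      have bS: "sc (\<beta> (Suc k)) = sc (r ^ 2) * sc (\<beta> k)"
        unfolding sc_mult \<beta>_def e by (simp add: algebra_simps)
      have "B * D ^ Suc k - sc (\<beta> (Suc k)) * D ^ Suc k
          = (B * D - sc (r ^ 2) * (D * B)) * D ^ k + (sc (r ^ 2) * D) * (B * D ^ k - sc (\<beta> k) * D ^ k)"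
        unfolding bS by (simp add: algebra_simps scl)
      also have "\<dots> \<in> J"
        by (intro J_add J_Relmult E2' J_mult Yp_sc YD Suc)
      finally show ?case .
    qed
    have Q: "C * D ^ k - sc (\<gamma> k) * D ^ k \<in> J" for k
    proof (induction k)
      case 0
      then show ?case using CJ0 by (simp add: \<gamma>_def)
    next
      case (Suc k)
      have e: "r ^ (2 * Suc k) = r ^ 2 * r ^ (2 * k)" by (metis mult_Suc_right power_add)
      have "\<gamma> (Suc k) = \<gamma> k + (r - q) * \<beta> k"
        unfolding \<gamma>_def \<beta>_def e using g_step[OF qr1] by simp
      then have gS: "sc (\<gamma> (Suc k)) = sc (\<gamma> k) + sc (r - q) * sc (\<beta> k)"
        unfolding sc_mult sc_add[symmetric] by simp
      have "C * D ^ Suc k - sc (\<gamma> (Suc k)) * D ^ Suc k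
          = (C * D - D * C - sc (r - q) * (D * B)) * D ^ k + D * (C * D ^ k - sc (\<gamma> k) * D ^ k)
            + (sc (r - q) * D) * (B * D ^ k - sc (\<beta> k) * D ^ k)"
        unfolding gS by (simp add: algebra_simps scl)
      also have "\<dots> \<in> J"
        by (intro J_add J_Relmult E3' J_mult Yp_sc YD Suc P)
      finally show ?case .
    qed
    have V: "A * D ^ Suc k - sc (\<alpha> (Suc k)) * D ^ k \<in> J"
      if W: "D * (A * D ^ k) - sc (\<alpha> k) * D ^ k \<in> J" for k
    proof -
      have e: "r ^ (2 * Suc k) = r ^ 2 * r ^ (2 * k)" by (metis mult_Suc_right power_add)
      have e4: "r ^ (4 * k) = r ^ (2 * k) * r ^ (2 * k)"
        by (metis mult_2 mult.assoc numeral_Bit0 power_add)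
      have e4S: "r ^ (4 * Suc k) = r ^ (2 * Suc k) * r ^ (2 * Suc k)"
        by (metis mult_2 mult.assoc numeral_Bit0 power_add)
      have "\<alpha> (Suc k) = \<alpha> k + (1 - q^2) * (\<beta> k * \<gamma> k + r * (\<beta> k * \<beta> k))"
        unfolding \<alpha>_def \<gamma>_def \<beta>_def e4 e4S e using a_step[OF qr1] by simp
      then have aS: "sc (\<alpha> (Suc k)) = sc (\<alpha> k) + sc (1 - q^2) * (sc (\<beta> k) * sc (\<gamma> k) + sc r * (sc (\<beta> k) * sc (\<beta> k)))"
        unfolding sc_mult sc_add[symmetric] by simp
      have "A * D ^ Suc k - sc (\<alpha> (Suc k)) * D ^ k
          = (A * D - D * A - sc (1 - q^2) * (C * B + sc r * (B * B))) * D ^ k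
            + (D * (A * D ^ k) - sc (\<alpha> k) * D ^ k)
            + sc (1 - q^2) * (C * (B * D ^ k - sc (\<beta> k) * D ^ k)
                + sc (\<beta> k) * (C * D ^ k - sc (\<gamma> k) * D ^ k)
                + sc r * (B * (B * D ^ k - sc (\<beta> k) * D ^ k)
                          + sc (\<beta> k) * (B * D ^ k - sc (\<beta> k) * D ^ k)))"
        unfolding aS by (simp add: algebra_simps scl sc_assoc)
      also have "\<dots> \<in> J"
        by (intro J_add J_Relmult E4' W J_sc J_mult YC YB P Q)
      finally show ?thesis .
    qed
    have W: "D * (A * D ^ k) - sc (\<alpha> k) * D ^ k \<in> J" for k
    proof (induction k)
      case 0
      then show ?case using J_mult[OF YD AJ] by (simp add: \<alpha>_def)
    next
      case (Suc k)
      have "D * (A * D ^ Suc k) - sc (\<alpha> (Suc k)) * D ^ Suc k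
          = D * (A * D ^ Suc k - sc (\<alpha> (Suc k)) * D ^ k)"
        by (simp add: algebra_simps scl)
      also have "\<dots> \<in> J" by (intro J_mult YD V Suc)
      finally show ?case .
    qed
    have rpow: "r ^ n \<noteq> 1" if "n > 0" for n
      using qn[OF that] inv_pow_one[OF q0, of n] by (auto simp: r_def)
    have a0: "\<alpha> (Suc k) \<noteq> 0" for k
    proof -
      have x0: "r ^ (2 * Suc k) \<noteq> 0" using r0 by simp
      have x1: "r ^ (2 * Suc k) \<noteq> 1" by (rule rpow) simp
      have "r ^ (4 * Suc k) = r ^ (2 * Suc k) * r ^ (2 * Suc k)"
        by (metis mult_2 mult.assoc numeral_Bit0 power_add)
      then have "r ^ (2 * Suc k) - r ^ (4 * Suc k) = r ^ (2 * Suc k) * (1 - r ^ (2 * Suc k))"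
        by (simp add: algebra_simps)
      moreover have "r ^ (2 * Suc k) * (1 - r ^ (2 * Suc k)) \<noteq> 0" using x0 x1 by simp
      ultimately show ?thesis using b0 q0 by (simp add: \<alpha>_def)
    qed
    have down: "D ^ k \<in> J" if "D ^ Suc k \<in> J" for k
    proof -
      have "A * D ^ Suc k \<in> J" by (rule J_mult[OF YA that])
      then have "A * D ^ Suc k - (A * D ^ Suc k - sc (\<alpha> (Suc k)) * D ^ k) \<in> J"
        by (intro J_diff V W)
      then have "sc (\<alpha> (Suc k)) * D ^ k \<in> J" by simp
      then have "sc (inverse (\<alpha> (Suc k))) * (sc (\<alpha> (Suc k)) * D ^ k) \<in> J" by (rule J_sc)
      then show ?thesis using a0[of k] by (simp add: sc_assoc)
    qed
    have notin: "D ^ k \<notin> J" for k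
    proof (induction k)
      case 0 then show ?case using one_notin by simp
    next
      case (Suc k) then show ?case using down by blast
    qed
    have binj: "\<beta> j \<noteq> \<beta> k" if "j \<noteq> k" for j k
    proof -
      have "r ^ (2 * j) \<noteq> r ^ (2 * k)" if "j < k" for j k
      proof
        assume "r ^ (2 * j) = r ^ (2 * k)"
        moreover have "r ^ (2 * k) = r ^ (2 * j) * r ^ (2 * (k - j))"
        proof -
          have "2 * k = 2 * j + 2 * (k - j)" using that by simp
          then show ?thesis by (metis power_add)
        qed
        ultimately have "r ^ (2 * (k - j)) = 1" using r0 by simp
        then show False using rpow[of "2 * (k - j)"] that by simp
      qed
      then have "r ^ (2 * j) \<noteq> r ^ (2 * k)" using \<open>j \<noteq> k\<close>
        by (metis linorder_neqE_nat)
      then show ?thesis using b0 by (simp add: \<beta>_def)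
    qed
    have iso: "finite S \<Longrightarrow> \<forall>c. (\<Sum>k\<in>S. sc (c k) * D ^ k) \<in> J \<longrightarrow> (\<forall>k\<in>S. c k = 0)" for S
    proof (induction S rule: finite_induct)
      case empty then show ?case by simp
    next
      case (insert j S)
      show ?case
      proof (intro allI impI)
        fix c assume cJ: "(\<Sum>k\<in>insert j S. sc (c k) * D ^ k) \<in> J"
        define c' where "c' k = c k * (\<beta> k - \<beta> j)" for k
        have pt: "(B - sc (\<beta> j)) * (sc (c k) * D ^ k)
            = sc (c k) * (B * D ^ k - sc (\<beta> k) * D ^ k) + sc (c' k) * D ^ k" for k
          by (simp add: c'_def algebra_simps scl sc_assoc sc_diff)
        have "(B - sc (\<beta> j)) * (\<Sum>k\<in>insert j S. sc (c k) * D ^ k) \<in> J"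
          by (rule J_mult[OF Yp_diff[OF YB Yp_scalar] cJ])
        also have "(B - sc (\<beta> j)) * (\<Sum>k\<in>insert j S. sc (c k) * D ^ k)
            = (\<Sum>k\<in>insert j S. sc (c k) * (B * D ^ k - sc (\<beta> k) * D ^ k))
              + (\<Sum>k\<in>insert j S. sc (c' k) * D ^ k)"
          by (simp only: sum_distrib_left pt sum.distrib)
        also have "(\<Sum>k\<in>insert j S. sc (c' k) * D ^ k) = (\<Sum>k\<in>S. sc (c' k) * D ^ k)"
          using insert.hyps by (simp add: c'_def)
        finally have h: "(\<Sum>k\<in>insert j S. sc (c k) * (B * D ^ k - sc (\<beta> k) * D ^ k))
              + (\<Sum>k\<in>S. sc (c' k) * D ^ k) \<in> J" .
        have "(\<Sum>k\<in>insert j S. sc (c k) * (B * D ^ k - sc (\<beta> k) * D ^ k)) \<in> J"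
          using insert.hyps by (intro J_sum J_sc P) auto
        then have "(\<Sum>k\<in>insert j S. sc (c k) * (B * D ^ k - sc (\<beta> k) * D ^ k))
              + (\<Sum>k\<in>S. sc (c' k) * D ^ k)
              - (\<Sum>k\<in>insert j S. sc (c k) * (B * D ^ k - sc (\<beta> k) * D ^ k)) \<in> J"
          by (intro J_diff h)
        then have "(\<Sum>k\<in>S. sc (c' k) * D ^ k) \<in> J" by simp
        then have c'0: "\<forall>k\<in>S. c' k = 0" using insert.IH by blast
        have cS: "\<forall>k\<in>S. c k = 0"
        proof
          fix k assume k: "k \<in> S"
          then have "k \<noteq> j" using insert.hyps by auto
          then have "\<beta> k - \<beta> j \<noteq> 0" using binj by simp
          moreover have "c k * (\<beta> k - \<beta> j) = 0" using c'0 k by (simp add: c'_def)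
          ultimately show "c k = 0" by simp
        qed
        then have "(\<Sum>k\<in>insert j S. sc (c k) * D ^ k) = sc (c j) * D ^ j"
          using insert.hyps by simp
        then have "sc (c j) * D ^ j \<in> J" using cJ by simp
        then have "sc (inverse (c j)) * (sc (c j) * D ^ j) \<in> J" by (rule J_sc)
        then have "c j = 0" using notin[of j] by (cases "c j = 0") (auto simp: sc_assoc)
        then show "\<forall>k\<in>insert j S. c k = 0" using cS by simp
      qed
    qed
    from assms(4) obtain F where F: "finite F" "F \<subseteq> Yp q"
      "\<forall>y\<in>Yp q. \<exists>c. y - (\<Sum>f\<in>F. sc (c f) * f) \<in> J"
      unfolding fin_dim_quot_def by blast
    have "\<forall>k. \<exists>c. D ^ k - (\<Sum>f\<in>F. sc (c f) * f) \<in> J" using F(3) YDk by blast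
    then obtain M where M: "\<And>k. D ^ k - (\<Sum>f\<in>F. sc (M k f) * f) \<in> J"
      using choice[of "\<lambda>k c. D ^ k - (\<Sum>f\<in>F. sc (c f) * f) \<in> J"] by blast
    obtain c where c: "\<exists>k\<in>{..card F}. c k \<noteq> 0"
      "\<forall>f\<in>F. (\<Sum>k\<in>{..card F}. c k * M k f) = 0"
      using lin_dep[OF F(1), of "{..card F}" M] by auto
    have swap: "(\<Sum>k\<in>{..card F}. sc (c k) * (\<Sum>f\<in>F. sc (M k f) * f))
        = (\<Sum>f\<in>F. sc (\<Sum>k\<in>{..card F}. c k * M k f) * f)"
      by (simp add: sum_distrib_left sc_assoc sc_sum sum_distrib_right sum.swap[of _ F])
    have "(\<Sum>k\<in>{..card F}. sc (c k) * D ^ k)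
        = (\<Sum>k\<in>{..card F}. sc (c k) * (D ^ k - (\<Sum>f\<in>F. sc (M k f) * f)))
          + (\<Sum>k\<in>{..card F}. sc (c k) * (\<Sum>f\<in>F. sc (M k f) * f))"
      by (simp add: right_diff_distrib sum_subtractf)
    also have "(\<Sum>k\<in>{..card F}. sc (c k) * (\<Sum>f\<in>F. sc (M k f) * f)) = 0"
      unfolding swap using c(2) by simp
    finally have "(\<Sum>k\<in>{..card F}. sc (c k) * D ^ k)
        = (\<Sum>k\<in>{..card F}. sc (c k) * (D ^ k - (\<Sum>f\<in>F. sc (M k f) * f)))" by simp
    also have "\<dots> \<in> J" by (intro J_sum J_sc M) auto
    finally have "\<forall>k\<in>{..card F}. c k = 0" using iso[of "{..card F}"] by blast
    then show False using c(1) by blast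
  qed
  show ?thesis using mu0 mub0 by blast
qed

end
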